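(* Let $(\varphi_\alpha)_{\alpha>0}$ be a non-linear regularizing filter and fix $\alpha>0$. Then $\operatorname{ran}(\mathbf{M}_\kappa^+\circ\Phi_{\alpha,\kappa})\subseteq\operatorname{dom}(\mathcal{R}_\alpha)$, and moreover $\operatorname{ran}(\mathbf{M}_\kappa^+\circ\Phi_{\alpha,\kappa})\subseteq\operatorname{dom}(\partial\mathcal{R}_\alpha)$.
   Context: $\Lambda$ is an at most countable index set and $\kappa=(\kappa_\lambda)_{\lambda\in\Lambda}\in(0,\infty)^\Lambda$ with $\sup_\lambda\kappa_\lambda<\infty$. $\mathbf{M}_\kappa\colon\ell^2(\Lambda)\to\ell^2(\Lambda)$, $(x_\lambda)\mapsto(\kappa_\lambda x_\lambda)$; $\mathbf{M}_\kappa^+$ is its Moore–Penrose inverse, with domain $\{(c_\lambda)\in\ell^2:(c_\lambda/\kappa_\lambda)\in\ell^2\}$ and $\mathbf{M}_\kappa^+((c_\lambda))=(c_\lambda/\kappa_\lambda)$. A non-linear regularizing filter is a family $(\varphi_\alpha)_{\alpha>0}$ of functions $\varphi_\alpha\colon(0,\infty)\times\mathbb{R}\to\mathbb{R}$ such that for all $\alpha,\kappa>0$: (F1) $\varphi_\alpha(\kappa,\cdot)$ is non-decreasing; (F2) $\varphi_\alpha(\kappa,\cdot)$ is 1-Lipschitz; (F3) $\varphi_\alpha(\kappa,0)=0$; (F4) $\lim_{\alpha\to0}\varphi_\alpha(\kappa,c)=c$ for all $c\in\mathbb{R}$. $\Phi_{\alpha,\kappa}((c_\lambda))=(\varphi_\alpha(\kappa_\lambda,c_\lambda))_\lambda$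 on $\ell^2(\Lambda)$; $\operatorname{dom}(\mathbf{M}_\kappa^+\circ\Phi_{\alpha,\kappa})=\{z:\Phi_{\alpha,\kappa}(z)\in\operatorname{dom}(\mathbf{M}_\kappa^+)\}$. $\kappa$-regularizer: for each $\alpha>0,\lambda\in\Lambda$ let $s_{\alpha,\lambda}\colon\mathbb{R}\to\mathbb{R}\cup\{\infty\}$ be proper, convex, lower semi-continuous with $s_{\alpha,\lambda}\ge s_{\alpha,\lambda}(0)=0$ and $\varphi_\alpha(\kappa_\lambda,\cdot)=\operatorname{prox}_{s_{\alpha,\lambda}}$ (such functions exist); then $\mathcal{R}_\alpha((x_\lambda)_\lambda):=\sum_{\lambda}s_{\alpha,\lambda}(\kappa_\lambda x_\lambda)$ on $\ell^2(\Lambda)$. Here $\operatorname{prox}_f(x)=\operatorname{argmin}_y\tfrac12|x-y|^2+f(y)$, $\operatorname{dom}(\mathcal{R})=\{x:\mathcal{R}(x)<\infty\}$ and $\partial$ denotes the convex subdifferential. *)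

theory Defs
  imports "HOL-Analysis.Analysis" "HOL-Library.Extended_Real"
begin

definition l2 :: "('i \<Rightarrow> real) set" where
  "l2 = {x. (\<lambda>i. (x i)\<^sup>2) summable_on UNIV}"

definition l2_inner :: "('i \<Rightarrow> real) \<Rightarrow> ('i \<Rightarrow> real) \<Rightarrow> real" where
  "l2_inner x y = (\<Sum>\<^sub>\<infinity>i. x i * y i)"

definition M_op :: "('i \<Rightarrow> real) \<Rightarrow> ('i \<Rightarrow> real) \<Rightarrow> ('i \<Rightarrow> real)" where
  "M_op \<kappa> x = (\<lambda>i. \<kappa> i * x i)"

definition M_pinv_dom :: "('i \<Rightarrow> real) \<Rightarrow> ('i \<Rightarrow> real) set" where
  "M_pinv_dom \<kappa> = {c. c \<in> l2 \<and> (\<lambda>i. c i / \<kappa> i) \<in> l2}"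

definition M_pinv :: "('i \<Rightarrow> real) \<Rightarrow> ('i \<Rightarrow> real) \<Rightarrow> ('i \<Rightarrow> real)" where
  "M_pinv \<kappa> c = (\<lambda>i. c i / \<kappa> i)"

definition nonlinear_reg_filter :: "(real \<Rightarrow> real \<Rightarrow> real \<Rightarrow> real) \<Rightarrow> bool" where
  "nonlinear_reg_filter \<phi> \<longleftrightarrow>
     (\<forall>\<alpha>>0. \<forall>k>0.
        mono (\<phi> \<alpha> k) \<and>
        (\<forall>c d. \<bar>\<phi> \<alpha> k c - \<phi> \<alpha> k d\<bar> \<le> \<bar>c - d\<bar>) \<and>
        \<phi> \<alpha> k 0 = 0) \<and>
     (\<forall>k>0. \<forall>c. ((\<lambda>\<alpha>. \<phi> \<alpha> k c) \<longlongrightarrow> c) (at_right 0))"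

definition Phi_op :: "(real \<Rightarrow> real \<Rightarrow> real \<Rightarrow> real) \<Rightarrow> real \<Rightarrow> ('i \<Rightarrow> real) \<Rightarrow> ('i \<Rightarrow> real) \<Rightarrow> ('i \<Rightarrow> real)" where
  "Phi_op \<phi> \<alpha> \<kappa> c = (\<lambda>i. \<phi> \<alpha> (\<kappa> i) (c i))"

definition MPhi_dom :: "(real \<Rightarrow> real \<Rightarrow> real \<Rightarrow> real) \<Rightarrow> real \<Rightarrow> ('i \<Rightarrow> real) \<Rightarrow> ('i \<Rightarrow> real) set" where
  "MPhi_dom \<phi> \<alpha> \<kappa> = {z. z \<in> l2 \<and> Phi_op \<phi> \<alpha> \<kappa> z \<in> M_pinv_dom \<kappa>}"

definition MPhi_ran :: "(real \<Rightarrow> real \<Rightarrow> real \<Rightarrow> real) \<Rightarrow> real \<Rightarrow> ('i \<Rightarrow> real) \<Rightarrow> ('i \<Rightarrow> real) set" where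
  "MPhi_ran \<phi> \<alpha> \<kappa> = (\<lambda>z. M_pinv \<kappa> (Phi_op \<phi> \<alpha> \<kappa> z)) ` MPhi_dom \<phi> \<alpha> \<kappa>"

definition proper_fun :: "(real \<Rightarrow> ereal) \<Rightarrow> bool" where
  "proper_fun f \<longleftrightarrow> (\<forall>x. f x \<noteq> -\<infinity>) \<and> (\<exists>x. f x \<noteq> \<infinity>)"

definition convex_efun :: "(real \<Rightarrow> ereal) \<Rightarrow> bool" where
  "convex_efun f \<longleftrightarrow> (\<forall>x y t. 0 \<le> t \<and> t \<le> 1 \<longrightarrow>
      f ((1 - t) * x + t * y) \<le> ereal (1 - t) * f x + ereal t * f y)"

definition lsc_efun :: "(real \<Rightarrow> ereal) \<Rightarrow> bool" where
  "lsc_efun f \<longleftrightarrow> (\<forall>x. f x \<le> Liminf (at x) f)"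

definition prox :: "(real \<Rightarrow> ereal) \<Rightarrow> real \<Rightarrow> real" where
  "prox f x = (THE y. \<forall>z. ereal ((x - y)\<^sup>2 / 2) + f y \<le> ereal ((x - z)\<^sup>2 / 2) + f z)"

text \<open>The kappa-regularizer R_alpha(x) = sum_i s_{alpha,i}(kappa_i x_i) of nonnegative
  extended reals: finite iff all terms finite and summable, infinite otherwise.\<close>
definition reg_R :: "(real \<Rightarrow> 'i \<Rightarrow> real \<Rightarrow> ereal) \<Rightarrow> ('i \<Rightarrow> real) \<Rightarrow> real \<Rightarrow> ('i \<Rightarrow> real) \<Rightarrow> ereal" where
  "reg_R s \<kappa> \<alpha> x =
    (if (\<forall>i. s \<alpha> i (\<kappa> i * x i) \<noteq> \<infinity>) \<and>
        (\<lambda>i. real_of_ereal (s \<alpha> i (\<kappa> i * x i))) summable_on UNIV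
     then ereal (\<Sum>\<^sub>\<infinity>i. real_of_ereal (s \<alpha> i (\<kappa> i * x i)))
     else \<infinity>)"

definition efun_dom :: "(('i \<Rightarrow> real) \<Rightarrow> ereal) \<Rightarrow> ('i \<Rightarrow> real) set" where
  "efun_dom R = {x. x \<in> l2 \<and> R x < \<infinity>}"

definition subdiff_l2 :: "(('i \<Rightarrow> real) \<Rightarrow> ereal) \<Rightarrow> ('i \<Rightarrow> real) \<Rightarrow> ('i \<Rightarrow> real) set" where
  "subdiff_l2 R x = {\<xi>. \<xi> \<in> l2 \<and>
      (\<forall>y\<in>l2. R y \<ge> R x + ereal (l2_inner \<xi> (\<lambda>i. y i - x i)))}"

definition subdiff_dom :: "(('i \<Rightarrow> real) \<Rightarrow> ereal) \<Rightarrow> ('i \<Rightarrow> real) set" where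
  "subdiff_dom R = {x. x \<in> l2 \<and> subdiff_l2 R x \<noteq> {}}"

end

theory Submission
  imports Defs
begin


lemma small_t:
  fixes a b c :: real
  assumes "\<And>t. 0 < t \<Longrightarrow> t \<le> 1 \<Longrightarrow> a \<le> b + t * c" "c \<ge> 0"
  shows "a \<le> b"
proof (rule ccontr)
  assume "\<not> a \<le> b"
  define t where "t = min 1 ((a - b) / (c + 1))"
  have t0: "0 < t" "t \<le> 1" using \<open>\<not> a \<le> b\<close> assms(2) by (auto simp: t_def)
  have "t * c \<le> (a - b) / (c + 1) * c" using t0 assms(2) by (intro mult_right_mono) (auto simp: t_def)
  also have "\<dots> < a - b" using \<open>\<not> a \<le> b\<close> assms(2) by (simp add: field_simps)
  finally show False using assms(1)[OF t0] by linarith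
qed

lemma prox_subgrad:
  fixes f :: "real \<Rightarrow> ereal"
  assumes conv: "convex_efun f" and nn: "\<And>t. f t \<ge> 0" and f0: "f 0 = 0"
    and P: "\<And>w. ereal ((z - p)\<^sup>2 / 2) + f p \<le> ereal ((z - w)\<^sup>2 / 2) + f w"
  shows "f p \<noteq> \<infinity>" and "\<And>w. f w \<ge> f p + ereal ((z - p) * (w - p))"
proof -
  have "ereal ((z - p)\<^sup>2 / 2) + f p \<le> ereal (z\<^sup>2 / 2)" using P[of 0] f0 by simp
  then show fin: "f p \<noteq> \<infinity>" by auto
  then obtain a where a: "f p = ereal a" using nn[of p] by (cases "f p") auto
  fix w
  show "f w \<ge> f p + ereal ((z - p) * (w - p))"
  proof (cases "f w = \<infinity>")
    case True then show ?thesis by simp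
  next
    case False
    then obtain b where b: "f w = ereal b" using nn[of w] by (cases "f w") auto
    have "a \<le> b - (z - p) * (w - p) + t * ((w - p)\<^sup>2 / 2)" if t: "0 < t" "t \<le> 1" for t
    proof -
      define wt where "wt = (1 - t) * p + t * w"
      have "f wt \<le> ereal (1 - t) * f p + ereal t * f w"
        using conv t unfolding convex_efun_def wt_def by (meson less_imp_le)
      also have "\<dots> = ereal ((1 - t) * a + t * b)" by (simp add: a b)
      finally have c: "f wt \<le> ereal ((1 - t) * a + t * b)" .
      have "ereal ((z - p)\<^sup>2 / 2 + a) \<le> ereal ((z - wt)\<^sup>2 / 2) + f wt" using P[of wt] a by simp
      also have "\<dots> \<le> ereal ((z - wt)\<^sup>2 / 2) + ereal ((1 - t) * a + t * b)"
        using c by (rule add_left_mono)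
      finally have r: "(z - p)\<^sup>2 / 2 + a \<le> (z - wt)\<^sup>2 / 2 + ((1 - t) * a + t * b)" by simp
      have "(z - wt)\<^sup>2 = (z - p)\<^sup>2 - 2 * t * ((z - p) * (w - p)) + t * (t * (w - p)\<^sup>2)"
        unfolding wt_def by (simp add: power2_eq_square algebra_simps)
      moreover have "(1 - t) * a + t * b = a - t * a + t * b" by (simp add: algebra_simps)
      ultimately have "t * a \<le> t * b - t * ((z - p) * (w - p)) + t * (t * (w - p)\<^sup>2) / 2"
        using r by linarith
      also have "t * b - t * ((z - p) * (w - p)) + t * (t * (w - p)\<^sup>2) / 2
           = t * (b - (z - p) * (w - p) + t * ((w - p)\<^sup>2 / 2))"
        by (simp add: algebra_simps)
      finally show ?thesis by (rule mult_left_le_imp_le) (rule t(1))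
    qed
    then have "a \<le> b - (z - p) * (w - p)" by (rule small_t[where c = "(w - p)\<^sup>2 / 2"]) auto
    then show ?thesis by (simp add: a b)
  qed
qed




lemma prox_exists:
  fixes f :: "real \<Rightarrow> ereal"
  assumes lsc: "lsc_efun f" and nn: "\<And>t. f t \<ge> 0" and f0: "f 0 = 0"
  shows "\<exists>p. \<forall>w. ereal ((z - p)\<^sup>2 / 2) + f p \<le> ereal ((z - w)\<^sup>2 / 2) + f w"
proof (rule ccontr)
  assume contra: "\<not> ?thesis"
  define g where "g y = ereal ((z - y)\<^sup>2 / 2) + f y" for y
  define m where "m = Inf (range g)"
  have mle: "m \<le> g y" for y unfolding m_def by (rule Inf_lower) simp
  have "m \<le> ereal (z\<^sup>2 / 2)" using mle[of 0] f0 by (simp add: g_def)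
  moreover have "m \<ge> 0" unfolding m_def
    by (rule Inf_greatest) (auto simp: g_def intro!: add_nonneg_nonneg nn)
  ultimately obtain mr where mr: "m = ereal mr" "mr \<le> z\<^sup>2 / 2"
    by (cases m) auto
  have gt: "g y > m" for y
  proof -
    from contra obtain w where "g w < g y" unfolding g_def by (meson not_le)
    with mle[of w] show ?thesis by simp
  qed
  have local: "\<exists>e>0. eventually (\<lambda>x. g x \<ge> ereal (mr + e)) (nhds y)" for y
  proof (cases "f y")
    case PInf
    have "f y \<le> Liminf (at y) f" using lsc unfolding lsc_efun_def by blast
    then have "ereal (mr + 1) < Liminf (at y) f" using PInf by simp
    then have "eventually (\<lambda>x. ereal (mr + 1) < f x) (at y)"
      using le_Liminf_iff by blast
    then have ev: "eventually (\<lambda>x. x \<noteq> y \<longrightarrow> ereal (mr + 1) < f x) (nhds y)"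
      by (simp add: eventually_at_filter)
    have "eventually (\<lambda>x. g x \<ge> ereal (mr + 1)) (nhds y)"
    proof (rule eventually_mono[OF ev])
      fix x assume h: "x \<noteq> y \<longrightarrow> ereal (mr + 1) < f x"
      show "g x \<ge> ereal (mr + 1)"
      proof (cases "x = y")
        case True then show ?thesis using PInf by (simp add: g_def)
      next
        case False
        then have "ereal (mr + 1) \<le> f x" using h by simp
        also have "f x \<le> g x" unfolding g_def
          by (rule add_increasing) auto
        finally show ?thesis .
      qed
    qed
    then show ?thesis by (intro exI[of _ 1]) auto
  next
    case (real fy)
    define q where "q x = (z - x)\<^sup>2 / 2" for x
    have "ereal mr < ereal (q y + fy)" using gt[of y] mr real by (simp add: g_def q_def)
    then have d: "q y + fy - mr > 0" by simp
    define e where "e = (q y + fy - mr) / 3"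
    have e0: "e > 0" using d by (simp add: e_def)
    have "f y \<le> Liminf (at y) f" using lsc unfolding lsc_efun_def by blast
    moreover have "ereal (fy - e) < f y" using real e0 by simp
    ultimately have "ereal (fy - e) < Liminf (at y) f" by (rule order_less_le_trans[rotated])
    then have ev1: "eventually (\<lambda>x. ereal (fy - e) < f x) (at y)"
      using le_Liminf_iff by blast
    have "continuous_on UNIV q" unfolding q_def by (intro continuous_intros) auto
    then have "(q \<longlongrightarrow> q y) (at y)" by (simp add: continuous_on_def)
    then have ev2: "eventually (\<lambda>x. dist (q x) (q y) < e) (at y)"
      using e0 tendstoD by blast
    have ev: "eventually (\<lambda>x. x \<noteq> y \<longrightarrow> ereal (fy - e) < f x \<and> dist (q x) (q y) < e) (nhds y)"
      using eventually_conj[OF ev1 ev2] by (simp add: eventually_at_filter)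
    have "eventually (\<lambda>x. g x \<ge> ereal (mr + e)) (nhds y)"
    proof (rule eventually_mono[OF ev])
      fix x assume h: "x \<noteq> y \<longrightarrow> ereal (fy - e) < f x \<and> dist (q x) (q y) < e"
      show "g x \<ge> ereal (mr + e)"
      proof (cases "x = y")
        case True then show ?thesis using real e0 d by (simp add: g_def q_def[symmetric] e_def field_simps)
      next
        case False
        then have h1: "ereal (fy - e) < f x" and h2: "q x > q y - e" using h
          by (auto simp: dist_real_def)
        have "mr + e \<le> q x + (fy - e)" using h2 unfolding e_def by (simp add: field_simps)
        then have "ereal (mr + e) \<le> ereal (q x) + ereal (fy - e)" by simp
        also have "\<dots> \<le> ereal (q x) + f x" using h1 by (intro add_left_mono) simp
        finally show ?thesis by (simp add: g_def q_def)
      qed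
    qed
    then show ?thesis using e0 by blast
  next
    case MInf then show ?thesis using nn[of y] by simp
  qed
  define r where "r = 2 * \<bar>z\<bar> + 1"
  define I where "I = {z - r .. z + r}"
  define T where "T = {U. open U \<and> (\<exists>e>0. \<forall>x\<in>U. g x \<ge> ereal (mr + e))}"
  have cov: "I \<subseteq> \<Union>T"
  proof
    fix y assume "y \<in> I"
    obtain e where e: "e > 0" "eventually (\<lambda>x. g x \<ge> ereal (mr + e)) (nhds y)"
      using local by blast
    then obtain U where "open U" "y \<in> U" "\<forall>x\<in>U. g x \<ge> ereal (mr + e)"
      unfolding eventually_nhds by blast
    then show "y \<in> \<Union>T" unfolding T_def using e by blast
  qed
  have "compact I" unfolding I_def by simp
  then obtain T' where T': "T' \<subseteq> T" "finite T'" "I \<subseteq> \<Union>T'"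
    using cov by (rule compactE) (auto simp: T_def)
  have "\<forall>U\<in>T'. \<exists>e. e > 0 \<and> (\<forall>x\<in>U. g x \<ge> ereal (mr + e))" using T' by (auto simp: T_def)
  then obtain E where E: "\<And>U. U \<in> T' \<Longrightarrow> E U > 0 \<and> (\<forall>x\<in>U. g x \<ge> ereal (mr + E U))"
    by metis
  define e0 where "e0 = Min (insert (1/2) (E ` T'))"
  have e0pos: "e0 > 0" unfolding e0_def using T'(2) E by (subst Min_gr_iff) auto
  have e0le: "e0 \<le> E U" if "U \<in> T'" for U unfolding e0_def using T'(2) that by (intro Min_le) auto
  have e0h: "e0 \<le> 1/2" unfolding e0_def using T'(2) by (intro Min_le) auto
  have all: "g y \<ge> ereal (mr + e0)" for y
  proof (cases "y \<in> I")
    case True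
    then obtain U where U: "U \<in> T'" "y \<in> U" using T'(3) by blast
    have "ereal (mr + e0) \<le> ereal (mr + E U)" using e0le[OF U(1)] by simp
    also have "\<dots> \<le> g y" using E[OF U(1)] U(2) by blast
    finally show ?thesis .
  next
    case False
    then have "\<bar>z - y\<bar> > r" unfolding I_def by auto
    moreover have "r \<ge> 0" unfolding r_def by simp
    ultimately have "(z - y)\<^sup>2 \<ge> r\<^sup>2"
      by (metis abs_le_square_iff abs_of_nonneg less_imp_le)
    moreover have "r\<^sup>2 \<ge> z\<^sup>2 + 1"
    proof -
      have a: "z * z = \<bar>z\<bar> * \<bar>z\<bar>" by (simp add: abs_mult_self_eq)
      have "r\<^sup>2 = 4 * (\<bar>z\<bar> * \<bar>z\<bar>) + 4 * \<bar>z\<bar> + 1" unfolding r_def by (simp add: power2_eq_square algebra_simps)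
      moreover have "\<bar>z\<bar> * \<bar>z\<bar> \<ge> 0" by simp
      ultimately show ?thesis using a unfolding power2_eq_square by linarith
    qed
    ultimately have "(z - y)\<^sup>2 / 2 \<ge> mr + e0" using mr(2) e0h by linarith
    then have "ereal (mr + e0) \<le> ereal ((z - y)\<^sup>2 / 2)" by simp
    also have "\<dots> \<le> g y" unfolding g_def using nn[of y] by (simp add: add_increasing2)
    finally show ?thesis .
  qed
  have "ereal (mr + e0) \<le> m" unfolding m_def by (rule Inf_greatest) (use all in auto)
  then show False using mr(1) e0pos by simp
qed




lemma prox_min:
  fixes f :: "real \<Rightarrow> ereal"
  assumes conv: "convex_efun f" and lsc: "lsc_efun f" and nn: "\<And>t. f t \<ge> 0" and f0: "f 0 = 0"
  shows "\<forall>w. ereal ((z - prox f z)\<^sup>2 / 2) + f (prox f z) \<le> ereal ((z - w)\<^sup>2 / 2) + f w"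
proof -
  let ?P = "\<lambda>y. \<forall>w. ereal ((z - y)\<^sup>2 / 2) + f y \<le> ereal ((z - w)\<^sup>2 / 2) + f w"
  obtain p where p: "?P p" using prox_exists[OF lsc nn f0] by blast
  have uniq: "y = p" if y: "?P y" for y
  proof -
    have fp: "f p \<noteq> \<infinity>" and sp: "\<And>w. f w \<ge> f p + ereal ((z - p) * (w - p))"
      using prox_subgrad[OF conv nn f0, of z p, OF p[rule_format]] by blast+
    have fy: "f y \<noteq> \<infinity>" and sy: "\<And>w. f w \<ge> f y + ereal ((z - y) * (w - y))"
      using prox_subgrad[OF conv nn f0, of z y, OF y[rule_format]] by blast+
    obtain a where a: "f p = ereal a" using fp nn[of p] by (cases "f p") auto
    obtain b where b: "f y = ereal b" using fy nn[of y] by (cases "f y") auto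
    have "b \<ge> a + (z - p) * (y - p)" using sp[of y] a b by simp
    moreover have "a \<ge> b + (z - y) * (p - y)" using sy[of p] a b by simp
    moreover have "(z - p) * (y - p) + (z - y) * (p - y) = (y - p) * (y - p)" by (simp add: algebra_simps)
    ultimately have "(y - p) * (y - p) \<le> 0" by linarith
    then have "(y - p) * (y - p) = 0" by (meson antisym zero_le_square)
    then show ?thesis by simp
  qed
  have "?P (THE y. ?P y)" by (rule theI[of ?P p, OF p uniq])
  then show ?thesis unfolding prox_def .
qed




lemma l2_prod: assumes "a \<in> l2" "b \<in> l2" shows "(\<lambda>i. a i * b i) summable_on UNIV"
proof -
  have ea: "(\<lambda>i. norm (a i * a i)) = (\<lambda>i. (a i)\<^sup>2)" by (rule ext) (simp add: power2_eq_square)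
  have eb: "(\<lambda>i. norm (b i * b i)) = (\<lambda>i. (b i)\<^sup>2)" by (rule ext) (simp add: power2_eq_square)
  have "(\<lambda>i. norm (a i * a i)) summable_on UNIV"
    using assms(1) unfolding l2_def ea by simp
  moreover have "(\<lambda>i. norm (b i * b i)) summable_on UNIV"
    using assms(2) unfolding l2_def eb by simp
  ultimately have "(\<lambda>i. norm (a i * b i)) summable_on UNIV" by (rule abs_summable_product)
  then show ?thesis using summable_on_iff_abs_summable_on_real by blast
qed



lemma l2_diff: assumes "a \<in> l2" "b \<in> l2" shows "(\<lambda>i. a i - b i) \<in> l2"
proof -
  have "(\<lambda>i. 2 * (a i)\<^sup>2 + 2 * (b i)\<^sup>2) summable_on UNIV"
    using assms unfolding l2_def mem_Collect_eq by (intro summable_on_add summable_on_cmult_right) 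
  then show ?thesis unfolding l2_def mem_Collect_eq
  proof (rule summable_on_comparison_test)
    fix i
    have "0 \<le> (a i + b i)\<^sup>2" by simp
    moreover have "2 * (a i)\<^sup>2 + 2 * (b i)\<^sup>2 = (a i - b i)\<^sup>2 + (a i + b i)\<^sup>2"
      by (simp add: power2_eq_square algebra_simps)
    ultimately show "(a i - b i)\<^sup>2 \<le> 2 * (a i)\<^sup>2 + 2 * (b i)\<^sup>2" by linarith
  qed simp
qed



lemma l2_mult: assumes "a \<in> l2" "\<And>i. \<bar>c i\<bar> \<le> K" shows "(\<lambda>i. c i * a i) \<in> l2"
proof -
  have "(\<lambda>i. K\<^sup>2 * (a i)\<^sup>2) summable_on UNIV"
    using assms unfolding l2_def mem_Collect_eq by (intro summable_on_cmult_right)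
  then show ?thesis unfolding l2_def mem_Collect_eq
  proof (rule summable_on_comparison_test)
    fix i
    have "\<bar>c i\<bar>\<^sup>2 \<le> K\<^sup>2" by (rule power_mono[OF assms(2)]) simp
    then have "(c i)\<^sup>2 \<le> K\<^sup>2" by simp
    then have "(c i)\<^sup>2 * (a i)\<^sup>2 \<le> K\<^sup>2 * (a i)\<^sup>2" by (rule mult_right_mono) simp
    then show "(c i * a i)\<^sup>2 \<le> K\<^sup>2 * (a i)\<^sup>2" by (simp only: power_mult_distrib)
  qed simp
qed




theorem lemma3p5:
  fixes \<phi> :: "real \<Rightarrow> real \<Rightarrow> real \<Rightarrow> real"
    and \<kappa> :: "'i::countable \<Rightarrow> real"
    and s :: "real \<Rightarrow> 'i \<Rightarrow> real \<Rightarrow> ereal"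
    and \<alpha> :: real
  assumes filt: "nonlinear_reg_filter \<phi>"
    and kpos: "\<And>i. \<kappa> i > 0"
    and kbdd: "bdd_above (range \<kappa>)"
    and s_props: "\<And>a i. a > 0 \<Longrightarrow>
        proper_fun (s a i) \<and> convex_efun (s a i) \<and> lsc_efun (s a i) \<and>
        s a i 0 = 0 \<and> (\<forall>t. s a i t \<ge> 0) \<and> \<phi> a (\<kappa> i) = prox (s a i)"
    and apos: "\<alpha> > 0"
  shows "MPhi_ran \<phi> \<alpha> \<kappa> \<subseteq> efun_dom (reg_R s \<kappa> \<alpha>)
         \<and> MPhi_ran \<phi> \<alpha> \<kappa> \<subseteq> subdiff_dom (reg_R s \<kappa> \<alpha>)"
proof -
  obtain K where K: "\<And>i. \<kappa> i \<le> K" using kbdd by (auto simp: bdd_above_def)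
  have Kabs: "\<bar>\<kappa> i\<bar> \<le> K" for i using K[of i] kpos[of i] by simp
  have main: "x \<in> efun_dom (reg_R s \<kappa> \<alpha>) \<and> x \<in> subdiff_dom (reg_R s \<kappa> \<alpha>)"
    if xr: "x \<in> MPhi_ran \<phi> \<alpha> \<kappa>" for x
  proof -
    from xr obtain z where zd: "z \<in> MPhi_dom \<phi> \<alpha> \<kappa>" and xz: "x = M_pinv \<kappa> (Phi_op \<phi> \<alpha> \<kappa> z)"
      unfolding MPhi_ran_def by blast
    define p where "p i = \<phi> \<alpha> (\<kappa> i) (z i)" for i
    have pPhi: "Phi_op \<phi> \<alpha> \<kappa> z = p" unfolding Phi_op_def p_def by simp
    have zl2: "z \<in> l2" and pl2: "p \<in> l2" and xl2': "(\<lambda>i. p i / \<kappa> i) \<in> l2"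
      using zd pPhi unfolding MPhi_dom_def M_pinv_dom_def by auto
    have xdef: "x = (\<lambda>i. p i / \<kappa> i)" using xz unfolding pPhi M_pinv_def by simp
    have xl2: "x \<in> l2" using xl2' xdef by simp
    have kx: "\<kappa> i * x i = p i" for i using kpos[of i] unfolding xdef by simp
    define f where "f i = s \<alpha> i" for i
    have fp: "convex_efun (f i)" "lsc_efun (f i)" "f i 0 = 0" "\<And>t. f i t \<ge> 0"
         "p i = prox (f i) (z i)" for i
      using s_props[OF apos, of i] unfolding f_def p_def by auto
    have sg: "f i (p i) \<noteq> \<infinity> \<and> (\<forall>w. f i w \<ge> f i (p i) + ereal ((z i - p i) * (w - p i)))" for i
    proof -
      have m: "\<And>w. ereal ((z i - p i)\<^sup>2 / 2) + f i (p i) \<le> ereal ((z i - w)\<^sup>2 / 2) + f i w"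
        using prox_min[OF fp(1,2,4,3), where z="z i"] fp(5)[of i] by simp
      show ?thesis using prox_subgrad[OF fp(1,4,3), where z="z i" and p="p i", OF m] by blast
    qed
    define b where "b i = real_of_ereal (f i (p i))" for i
    have fb: "f i (p i) = ereal (b i)" for i
      using sg[of i] fp(4)[of i "p i"] unfolding b_def by (cases "f i (p i)") auto
    have b0: "b i \<ge> 0" for i using fp(4)[of i "p i"] fb[of i] by simp
    have bub: "b i \<le> (z i - p i) * p i" for i
    proof -
      have "f i 0 \<ge> f i (p i) + ereal ((z i - p i) * (0 - p i))" using sg[of i] by blast
      then show ?thesis using fp(3)[of i] fb[of i] by simp
    qed
    have zp: "(\<lambda>i. z i - p i) \<in> l2" by (rule l2_diff[OF zl2 pl2])
    have bsum: "b summable_on UNIV"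
      by (rule summable_on_comparison_test[OF l2_prod[OF zp pl2]]) (use bub b0 in auto)
    have Rx: "reg_R s \<kappa> \<alpha> x = ereal (\<Sum>\<^sub>\<infinity>i. b i)"
      using sg bsum unfolding reg_R_def kx f_def[symmetric] b_def by simp
    have dom: "x \<in> efun_dom (reg_R s \<kappa> \<alpha>)" unfolding efun_dom_def using xl2 Rx by simp
    define \<xi> where "\<xi> i = \<kappa> i * (z i - p i)" for i
    have \<xi>l2: "\<xi> \<in> l2" unfolding \<xi>_def by (rule l2_mult[OF zp Kabs])
    have "\<xi> \<in> subdiff_l2 (reg_R s \<kappa> \<alpha>) x"
      unfolding subdiff_l2_def mem_Collect_eq
    proof (intro conjI ballI \<xi>l2)
      fix y :: "'i \<Rightarrow> real" assume yl2: "y \<in> l2"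
      show "reg_R s \<kappa> \<alpha> y \<ge> reg_R s \<kappa> \<alpha> x + ereal (l2_inner \<xi> (\<lambda>i. y i - x i))"
      proof (cases "(\<forall>i. s \<alpha> i (\<kappa> i * y i) \<noteq> \<infinity>) \<and>
          (\<lambda>i. real_of_ereal (s \<alpha> i (\<kappa> i * y i))) summable_on UNIV")
        case False
        then have "reg_R s \<kappa> \<alpha> y = \<infinity>" unfolding reg_R_def by simp
        then show ?thesis by simp
      next
        case True
        define a where "a i = real_of_ereal (f i (\<kappa> i * y i))" for i
        have Ry: "reg_R s \<kappa> \<alpha> y = ereal (\<Sum>\<^sub>\<infinity>i. a i)"
          using True unfolding reg_R_def a_def f_def by simp
        have asum: "a summable_on UNIV" using True unfolding a_def f_def by simp
        have fa: "f i (\<kappa> i * y i) = ereal (a i)" for i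
          using True fp(4)[of i "\<kappa> i * y i"] unfolding a_def f_def
          by (cases "s \<alpha> i (\<kappa> i * y i)") auto
        define c where "c i = \<xi> i * (y i - x i)" for i
        have csum: "c summable_on UNIV" unfolding c_def
          by (rule l2_prod[OF \<xi>l2 l2_diff[OF yl2 xl2]])
        have tm: "b i + c i \<le> a i" for i
        proof -
          have "f i (\<kappa> i * y i) \<ge> f i (p i) + ereal ((z i - p i) * (\<kappa> i * y i - p i))"
            using sg[of i] by blast
          then have "a i \<ge> b i + (z i - p i) * (\<kappa> i * y i - p i)" using fa[of i] fb[of i] by simp
          moreover have "c i = (z i - p i) * (\<kappa> i * y i - \<kappa> i * x i)"
            unfolding c_def \<xi>_def by (simp add: algebra_simps)
          then have "c i = (z i - p i) * (\<kappa> i * y i - p i)" by (simp only: kx)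
          ultimately show ?thesis by simp
        qed
        have "(\<Sum>\<^sub>\<infinity>i. b i) + (\<Sum>\<^sub>\<infinity>i. c i) = (\<Sum>\<^sub>\<infinity>i. b i + c i)"
          by (rule infsum_add[symmetric, OF bsum csum])
        also have "\<dots> \<le> (\<Sum>\<^sub>\<infinity>i. a i)"
          by (rule infsum_mono[OF summable_on_add[OF bsum csum] asum tm])
        finally have le: "(\<Sum>\<^sub>\<infinity>i. b i) + (\<Sum>\<^sub>\<infinity>i. c i) \<le> (\<Sum>\<^sub>\<infinity>i. a i)" .
        have "l2_inner \<xi> (\<lambda>i. y i - x i) = (\<Sum>\<^sub>\<infinity>i. c i)" unfolding l2_inner_def c_def by simp
        then show ?thesis using le unfolding Rx Ry by simp
      qed
    qed
    then have "x \<in> subdiff_dom (reg_R s \<kappa> \<alpha>)" unfolding subdiff_dom_def using xl2 by blast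
    with dom show ?thesis by blast
  qed
  show ?thesis using main by blast
qed


end
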